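(* Let $G=K_{s}^{t}$ with $3\leq t+1\leq s$ and $n=s+t$. Then $\lambda_{2}(D(G))=\sqrt{2}-2$.
   Context: $D(G)$ is the distance matrix of $G$, with eigenvalues $\lambda_{1}(D(G))\geq\lambda_{2}(D(G))\geq\cdots$. $K_{s}^{t}$ denotes the graph on $n=s+t$ vertices obtained from the complete graph $K_s$ by attaching a pendant edge (a new vertex of degree 1) to each of $t$ distinct vertices of $K_s$. *)

theory Defs
  imports "Jordan_Normal_Form.Char_Poly" "HOL-Computational_Algebra.Polynomial"
begin

text \<open>The graph K_s^t on vertex set {0..<s+t}: vertices 0..s-1 form the clique K_s;
  for j < t, vertex s+j is a pendant vertex attached to clique vertex j.\<close>
definition Kst_adj :: "nat \<Rightarrow> nat \<Rightarrow> nat \<Rightarrow> nat \<Rightarrow> bool" where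
  "Kst_adj s t u v \<longleftrightarrow> u < s + t \<and> v < s + t \<and> u \<noteq> v \<and>
     ((u < s \<and> v < s) \<or> (u < t \<and> v = u + s) \<or> (v < t \<and> u = v + s))"

definition graph_dist :: "(nat \<Rightarrow> nat \<Rightarrow> bool) \<Rightarrow> nat \<Rightarrow> nat \<Rightarrow> nat" where
  "graph_dist E u v = (LEAST k. (u, v) \<in> {(x, y). E x y} ^^ k)"

definition dist_matrix :: "nat \<Rightarrow> (nat \<Rightarrow> nat \<Rightarrow> bool) \<Rightarrow> real mat" where
  "dist_matrix n E = mat n n (\<lambda>(i, j). real (graph_dist E i j))"

text \<open>Eigenvalues (with multiplicity) of a real matrix whose characteristic polynomial
  splits over the reals (e.g. a symmetric matrix), sorted non-increasingly;
  eigval A i is lambda_i(A) for 1 <= i <= dim.\<close>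
definition eigval :: "real mat \<Rightarrow> nat \<Rightarrow> real" where
  "eigval A i = rev (sorted_list_of_multiset (proots (char_poly A))) ! (i - 1)"

end

theory Submission
  imports Defs
begin



definition dfun :: "nat \<Rightarrow> nat \<Rightarrow> nat \<Rightarrow> nat \<Rightarrow> nat" where
  "dfun s t u v = (if u = v then 0 else if Kst_adj s t u v then 1
      else if s \<le> u \<and> s \<le> v then 3 else 2)"

lemma relpow2: "(u,v) \<in> R ^^ 2 \<longleftrightarrow> (\<exists>w. (u,w) \<in> R \<and> (w,v) \<in> R)"
  by (auto simp: numeral_2_eq_2 relcomp_unfold)

lemma relpow3: "(u,v) \<in> R ^^ 3 \<longleftrightarrow> (\<exists>w x. (u,w) \<in> R \<and> (w,x) \<in> R \<and> (x,v) \<in> R)"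
  by (auto simp: numeral_3_eq_3 relcomp_unfold)

lemma graph_dist_Kst:
  assumes t2: "2 \<le> t" and ts: "t + 1 \<le> s" and u: "u < s + t" and v: "v < s + t"
  shows "graph_dist (Kst_adj s t) u v = dfun s t u v"
proof -
  let ?R = "{(x, y). Kst_adj s t x y}"
  have walk: "(u,v) \<in> ?R ^^ dfun s t u v"
  proof -
    consider "u = v" | "u \<noteq> v" "Kst_adj s t u v" | "u \<noteq> v" "\<not> Kst_adj s t u v" "s \<le> u" "s \<le> v"
      | "u \<noteq> v" "\<not> Kst_adj s t u v" "\<not> (s \<le> u \<and> s \<le> v)" by blast
    then show ?thesis
    proof cases
      case 1 then show ?thesis by (simp add: dfun_def)
    next
      case 2 then show ?thesis by (simp add: dfun_def)
    next
      case 3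
      then have "Kst_adj s t u (u - s)" "Kst_adj s t (u - s) (v - s)" "Kst_adj s t (v - s) v"
        using u v ts unfolding Kst_adj_def by auto
      then show ?thesis using 3 by (simp add: dfun_def relpow3) blast
    next
      case 4
      then consider "u < s" "v < s" | "u < s" "s \<le> v" | "s \<le> u" "v < s" by linarith
      then show ?thesis
      proof cases
        case 1 then show ?thesis using 4 u v unfolding Kst_adj_def by auto
      next
        case 2
        then have "Kst_adj s t u (v - s)" "Kst_adj s t (v - s) v"
          using 4 u v ts unfolding Kst_adj_def by auto
        then show ?thesis using 4 by (simp add: dfun_def relpow2) blast
      next
        case 3
        then have "Kst_adj s t u (u - s)" "Kst_adj s t (u - s) v"
          using 4 u v ts unfolding Kst_adj_def by auto
        then show ?thesis using 4 by (simp add: dfun_def relpow2) blast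
      qed
    qed
  qed
  have lower: "dfun s t u v \<le> k" if hk: "(u,v) \<in> ?R ^^ k" for k
  proof (rule ccontr)
    assume "\<not> dfun s t u v \<le> k"
    then have k: "k < dfun s t u v" by simp
    have "dfun s t u v \<le> 3" by (simp add: dfun_def)
    with k consider "k = 0" | "k = 1" | "k = 2" by linarith
    then show False
    proof cases
      case 1 then show False using hk k by (simp add: dfun_def split: if_splits)
    next
      case 2 then show False using hk k by (simp add: dfun_def split: if_splits)
    next
      case 3
      then obtain w where w: "Kst_adj s t u w" "Kst_adj s t w v" using hk by (auto simp: relpow2)
      from k 3 have "u \<noteq> v" "\<not> Kst_adj s t u v" "s \<le> u" "s \<le> v"
        by (auto simp: dfun_def split: if_splits)
      then show False using w ts unfolding Kst_adj_def by auto
    qed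
  qed
  show ?thesis unfolding graph_dist_def
    using walk lower by (intro Least_equality) auto
qed




definition ind :: "nat \<Rightarrow> nat \<Rightarrow> real" where "ind i a = (if i = a then 1 else 0)"
definition cc :: real where "cc = 1 - sqrt 2"

definition Pf :: "nat \<Rightarrow> nat \<Rightarrow> nat \<Rightarrow> nat \<Rightarrow> real" where
 "Pf p m v j = (if j < p then ind v j - ind v p + cc*(ind v (p+m+2+j) - ind v (2*p+m+2))
   else if j < 2*p then ind v (p+m+2+(j-p)) - ind v (2*p+m+2)
   else if j < 2*p+m then ind v (p+1+(j-2*p)) - ind v (p+1+m)
   else if j = 2*p+m then ind v p
   else if j = 2*p+m+1 then ind v (p+1+m)
   else ind v (2*p+m+2))"

definition Qf :: "nat \<Rightarrow> nat \<Rightarrow> nat \<Rightarrow> nat \<Rightarrow> real" where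
 "Qf p m j v = (if j < p then ind v j
   else if j < 2*p then ind v (p+m+2+(j-p)) - cc * ind v (j-p)
   else if j < 2*p+m then ind v (p+1+(j-2*p))
   else if j = 2*p+m then (if v \<le> p then 1 else 0)
   else if j = 2*p+m+1 then (if p < v \<and> v \<le> p+1+m then 1 else 0)
   else (if p+1+m < v then 1 else 0))"

definition dpm :: "nat \<Rightarrow> nat \<Rightarrow> nat \<Rightarrow> nat \<Rightarrow> nat" where
 "dpm p m u v = (if u = v then 0 else if u \<le> p+1+m \<and> v \<le> p+1+m then 1
    else if u \<le> p+1+m then (if v = p+m+2+u then 1 else 2)
    else if v \<le> p+1+m then (if u = p+m+2+v then 1 else 2) else 3)"

definition rr :: real where "rr = sqrt 2 - 2"

lemma sqrt2_sq: "sqrt 2 * sqrt 2 = 2" by simp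

lemma sum_ind: assumes "a < n" shows "(\<Sum>i\<in>{0..<n}. f i * ind i a) = f a"
proof -
  have "(\<Sum>i\<in>{0..<n}. f i * ind i a) = (\<Sum>i\<in>{0..<n}. if a = i then f i else 0)"
    by (rule sum.cong) (auto simp: ind_def)
  also have "\<dots> = f a" using assms by (simp add: sum.delta)
  finally show ?thesis .
qed

lemma sum_ind2: assumes "a < n" "b < n"
  shows "(\<Sum>i\<in>{0..<n}. f i * (ind i a - ind i b)) = f a - f b"
  using sum_ind[OF assms(1), of f] sum_ind[OF assms(2), of f]
  by (simp add: right_diff_distrib sum_subtractf)

lemma sum_ind4: assumes "a < n" "b < n" "p < n" "q < n"
  shows "(\<Sum>i\<in>{0..<n}. f i * (ind i a - ind i b + c * (ind i p - ind i q))) = f a - f b + c * (f p - f q)"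
proof -
  have "(\<Sum>i\<in>{0..<n}. f i * (ind i a - ind i b + c * (ind i p - ind i q)))
     = (\<Sum>i\<in>{0..<n}. f i * (ind i a - ind i b) + c * (f i * (ind i p - ind i q)))"
    by (rule sum.cong) (auto simp: algebra_simps)
  also have "\<dots> = (\<Sum>i\<in>{0..<n}. f i * (ind i a - ind i b)) + c * (\<Sum>i\<in>{0..<n}. f i * (ind i p - ind i q))"
    by (simp add: sum.distrib sum_distrib_left)
  finally show ?thesis using sum_ind2[OF assms(1,2), of f] sum_ind2[OF assms(3,4), of f] by simp
qed

context fixes p m :: nat assumes p1: "1 \<le> p"
begin

lemma idx_cases:
  assumes "j < 2*p+m+3"
  obtains (W) i where "i < p" "j = i" | (V) i where "i < p" "j = p + i" | (G) i where "i < m" "j = 2*p + i"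
   | (LA) "j = 2*p+m" | (LB) "j = 2*p+m+1" | (LP) "j = 2*p+m+2"
proof -
  consider "j < p" | "p \<le> j" "j < 2*p" | "2*p \<le> j" "j < 2*p+m" | "j = 2*p+m" | "j = 2*p+m+1" | "j = 2*p+m+2"
    using assms by linarith
  then show ?thesis
  proof cases
    case 1 then show ?thesis using W by blast
  next
    case 2 then show ?thesis using V[of "j - p"] by auto
  next
    case 3 then show ?thesis using G[of "j - 2*p"] by auto
  qed (use LA LB LP in auto)
qed

lemma vtx_cases:
  assumes "v < 2*p+m+3"
  obtains (A) i where "i < p" "v = i" | (LA) "v = p" | (B) i where "i < m" "v = p + 1 + i" | (LB) "v = p+1+m"
   | (P) i where "i < p" "v = p + m + 2 + i" | (LP) "v = 2*p+m+2"
proof -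
  consider "v < p" | "v = p" | "p+1 \<le> v" "v < p+1+m" | "v = p+1+m" | "p+m+2 \<le> v" "v < 2*p+m+2" | "v = 2*p+m+2"
    using assms by linarith
  then show ?thesis
  proof cases
    case 1 then show ?thesis using A by blast
  next
    case 3 then show ?thesis using B[of "v - (p+1)"] by auto
  next
    case 5 then show ?thesis using P[of "v - (p+m+2)"] by auto
  qed (use LA LB LP in auto)
qed

lemma sumP: assumes j: "j < 2*p+m+3"
  shows "(\<Sum>i\<in>{0..<2*p+m+3}. f i * Pf p m i j) =
   (if j < p then f j - f p + cc*(f (p+m+2+j) - f (2*p+m+2))
   else if j < 2*p then f (p+m+2+(j-p)) - f (2*p+m+2)
   else if j < 2*p+m then f (p+1 + (j-2*p)) - f (p+m+1)
   else if j = 2*p+m then f p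
   else if j = 2*p+m+1 then f (p+m+1)
   else f (2*p+m+2))"
  using j
proof (cases rule: idx_cases)
  case (W i) then show ?thesis unfolding Pf_def by (simp add: sum_ind4)
next
  case (V i) then show ?thesis unfolding Pf_def by (simp add: sum_ind2)
next
  case (G i) then show ?thesis unfolding Pf_def by (simp add: sum_ind2)
qed (auto simp: Pf_def sum_ind)


lemma QP: assumes j: "j < 2*p+m+3" and k: "k < 2*p+m+3"
  shows "(\<Sum>i\<in>{0..<2*p+m+3}. Qf p m j i * Pf p m i k) = (if j = k then 1 else 0)"
  unfolding sumP[OF k] using k
  by (cases rule: idx_cases; use j in \<open>cases rule: idx_cases\<close>; simp add: Qf_def ind_def)

lemma DP: assumes v: "v < 2*p+m+3" and k: "k < 2*p+m"
  shows "(\<Sum>u\<in>{0..<2*p+m+3}. real (dpm p m v u) * Pf p m u k) =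
    (if k < p then rr * Pf p m v k else if k < 2*p then - Pf p m v (k-p) + (cc - 3) * Pf p m v k
     else - Pf p m v k)"
proof -
  have k3: "k < 2*p+m+3" using k by simp
  show ?thesis unfolding sumP[OF k3] using k3 k
    by (cases rule: idx_cases; use v in \<open>cases rule: vtx_cases\<close>;
        simp add: dpm_def Pf_def ind_def rr_def cc_def algebra_simps)
qed

end



lemma det2: assumes A: "(A :: 'a :: comm_ring_1 mat) \<in> carrier_mat 2 2"
  shows "det A = A $$ (0,0) * A $$ (1,1) - A $$ (1,0) * A $$ (0,1)"
proof -
  have "det A = (\<Sum>i<2. A $$ (i,0) * cofactor A i 0)"
    by (rule laplace_expansion_column[OF A], simp)
  also have "\<dots> = A $$ (0,0) * cofactor A 0 0 + A $$ (1,0) * cofactor A 1 0"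
    by (simp add: numeral_2_eq_2)
  also have "cofactor A 0 0 = A $$ (1,1)"
    unfolding cofactor_def using A
    by (subst det_single) (auto simp: mat_delete_def mat_delete_carrier)
  also have "cofactor A 1 0 = - A $$ (0,1)"
    unfolding cofactor_def using A
    by (subst det_single) (auto simp: mat_delete_def mat_delete_carrier)
  finally show ?thesis by (simp add: algebra_simps)
qed

lemma det3: assumes A: "(A :: 'a :: comm_ring_1 mat) \<in> carrier_mat 3 3"
  shows "det A = A $$ (0,0) * (A $$ (1,1) * A $$ (2,2) - A $$ (2,1) * A $$ (1,2))
     - A $$ (1,0) * (A $$ (0,1) * A $$ (2,2) - A $$ (2,1) * A $$ (0,2))
     + A $$ (2,0) * (A $$ (0,1) * A $$ (1,2) - A $$ (1,1) * A $$ (0,2))"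
proof -
  have "det A = (\<Sum>i<3. A $$ (i,0) * cofactor A i 0)"
    by (rule laplace_expansion_column[OF A], simp)
  also have "\<dots> = A $$ (0,0) * cofactor A 0 0 + A $$ (1,0) * cofactor A 1 0 + A $$ (2,0) * cofactor A 2 0"
    by (simp add: eval_nat_numeral)
  also have "cofactor A 0 0 = A $$ (1,1) * A $$ (2,2) - A $$ (2,1) * A $$ (1,2)"
    unfolding cofactor_def using A
    by (subst det2) (auto simp: mat_delete_def mat_delete_carrier eval_nat_numeral)
  also have "cofactor A 1 0 = - (A $$ (0,1) * A $$ (2,2) - A $$ (2,1) * A $$ (0,2))"
    unfolding cofactor_def using A
    by (subst det2) (auto simp: mat_delete_def mat_delete_carrier eval_nat_numeral)
  also have "cofactor A 2 0 = A $$ (0,1) * A $$ (1,2) - A $$ (1,1) * A $$ (0,2)"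
    unfolding cofactor_def using A
    by (subst det2) (auto simp: mat_delete_def mat_delete_carrier eval_nat_numeral)
  finally show ?thesis by (simp add: algebra_simps)
qed




lemma sum_split6: fixes g :: "nat \<Rightarrow> 'a::comm_monoid_add"
  shows "(\<Sum>v\<in>{0..<2*p+m+3}. g v) = (\<Sum>i\<in>{0..<p}. g i) + g p + (\<Sum>i\<in>{0..<m}. g (p+1+i)) + g (p+1+m)
     + (\<Sum>i\<in>{0..<p}. g (p+m+2+i)) + g (2*p+m+2)"
proof -
  have sh: "\<And>a b. (\<Sum>i\<in>{0..<b}. g (a+i)) = (\<Sum>v\<in>{a..<a+b}. g v)"
    by (rule sym, subst sum.atLeastLessThan_shift_0, simp add: comp_def)
  have c: "\<And>a b c. a \<le> b \<Longrightarrow> b \<le> c \<Longrightarrow> (\<Sum>v\<in>{a..<c}. g v) = (\<Sum>v\<in>{a..<b}. g v) + (\<Sum>v\<in>{b..<c}. g v)"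
    by (simp add: sum.atLeastLessThan_concat)
  define N where "N = 2*p+m+3"
  have e1: "sum g {0..<N} = sum g {0..<p} + sum g {p..<N}" by (rule c) (auto simp: N_def)
  have e2: "sum g {p..<N} = sum g {p..<p+1} + sum g {p+1..<N}" by (rule c) (auto simp: N_def)
  have e3: "sum g {p+1..<N} = sum g {p+1..<p+1+m} + sum g {p+1+m..<N}" by (rule c) (auto simp: N_def)
  have e4: "sum g {p+1+m..<N} = sum g {p+1+m..<p+1+m+1} + sum g {p+1+m+1..<N}" by (rule c) (auto simp: N_def)
  have e5: "sum g {p+1+m+1..<N} = sum g {p+1+m+1..<p+1+m+1+p} + sum g {p+1+m+1+p..<N}" by (rule c) (auto simp: N_def)
  have N6: "N = p+1+m+1+p+1" by (simp add: N_def)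
  have e6: "sum g {p+1+m+1+p..<N} = sum g {p+1+m+1+p..<p+1+m+1+p+1}" by (simp only: N6)
  have "(\<Sum>v\<in>{0..<2*p+m+3}. g v) = (\<Sum>v\<in>{0..<p}. g v) + (\<Sum>v\<in>{p..<p+1}. g v) + (\<Sum>v\<in>{p+1..<p+1+m}. g v)
     + (\<Sum>v\<in>{p+1+m..<p+1+m+1}. g v) + (\<Sum>v\<in>{p+1+m+1..<p+1+m+1+p}. g v) + (\<Sum>v\<in>{p+1+m+1+p..<p+1+m+1+p+1}. g v)"
    unfolding N_def[symmetric] e1 e2 e3 e4 e5 e6 by (simp add: add.assoc)
  also have "\<dots> = (\<Sum>i\<in>{0..<p}. g i) + g p + (\<Sum>i\<in>{0..<m}. g (p+1+i)) + g (p+1+m)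
     + (\<Sum>i\<in>{0..<p}. g (p+m+2+i)) + g (2*p+m+2)"
    unfolding sh[symmetric] by (simp add: mult_2 add_ac)
  finally show ?thesis .
qed
definition Pm :: "nat \<Rightarrow> nat \<Rightarrow> real mat" where "Pm p m = mat (2*p+m+3) (2*p+m+3) (\<lambda>(i,j). Pf p m i j)"
definition Qm :: "nat \<Rightarrow> nat \<Rightarrow> real mat" where "Qm p m = mat (2*p+m+3) (2*p+m+3) (\<lambda>(i,j). Qf p m i j)"
definition Dm :: "nat \<Rightarrow> nat \<Rightarrow> real mat" where "Dm p m = mat (2*p+m+3) (2*p+m+3) (\<lambda>(i,j). real (dpm p m i j))"
definition Tm :: "nat \<Rightarrow> nat \<Rightarrow> real mat" where "Tm p m = Qm p m * (Dm p m * Pm p m)"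

lemma carr: "Pm p m \<in> carrier_mat (2*p+m+3) (2*p+m+3)" "Qm p m \<in> carrier_mat (2*p+m+3) (2*p+m+3)"
  "Dm p m \<in> carrier_mat (2*p+m+3) (2*p+m+3)" "Tm p m \<in> carrier_mat (2*p+m+3) (2*p+m+3)"
  by (auto simp: Pm_def Qm_def Dm_def Tm_def)

lemma DPe: assumes "v < 2*p+m+3" "k < 2*p+m+3"
  shows "(Dm p m * Pm p m) $$ (v,k) = (\<Sum>u\<in>{0..<2*p+m+3}. real (dpm p m v u) * Pf p m u k)"
  using assms by (simp add: Dm_def Pm_def scalar_prod_def)

lemma Te: assumes "j < 2*p+m+3" "k < 2*p+m+3"
  shows "Tm p m $$ (j,k) = (\<Sum>v\<in>{0..<2*p+m+3}. Qf p m j v * (Dm p m * Pm p m) $$ (v,k))"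
  using assms by (simp add: Tm_def Qm_def scalar_prod_def Dm_def Pm_def)

lemma QPe: assumes "j < 2*p+m+3" "k < 2*p+m+3"
  shows "(Qm p m * Pm p m) $$ (j,k) = (\<Sum>v\<in>{0..<2*p+m+3}. Qf p m j v * Pf p m v k)"
  using assms by (simp add: Qm_def Pm_def scalar_prod_def)


definition T2f :: "nat \<Rightarrow> nat \<Rightarrow> nat \<Rightarrow> nat \<Rightarrow> real" where
 "T2f p m a b = (if a = 0 then (if b = 0 then real p else if b = 1 then real p + 1 else 2 * real p + 1)
   else if a = 1 then (if b = 0 then real m + 1 else if b = 1 then real m else 2 * real m + 2)
   else (if b = 0 then 2 * real p + 1 else if b = 1 then 2 * real p + 2 else 3 * real p))"

context fixes p m :: nat assumes p1: "1 \<le> p"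
begin

lemma dims: "dim_row (Pm p m) = 2*p+m+3" "dim_col (Pm p m) = 2*p+m+3"
  "dim_row (Qm p m) = 2*p+m+3" "dim_col (Qm p m) = 2*p+m+3"
  "dim_row (Tm p m) = 2*p+m+3" "dim_col (Tm p m) = 2*p+m+3"
  by (auto simp: Pm_def Qm_def Tm_def Dm_def)

lemma QPm: "Qm p m * Pm p m = 1\<^sub>m (2*p+m+3)"
proof (rule eq_matI)
  fix i j assume i: "i < dim_row (1\<^sub>m (2*p+m+3))" and j: "j < dim_col (1\<^sub>m (2*p+m+3))"
  then have i': "i < 2*p+m+3" and j': "j < 2*p+m+3" by auto
  show "(Qm p m * Pm p m) $$ (i, j) = 1\<^sub>m (2*p+m+3) $$ (i, j)"
    unfolding QPe[OF i' j'] QP[OF p1 i' j'] using i' j' by simp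
qed (simp_all add: dims)

lemma PQm: "Pm p m * Qm p m = 1\<^sub>m (2*p+m+3)"
  using mat_mult_left_right_inverse[OF carr(2) carr(1) QPm] .

lemma Tsum: assumes j: "j < 2*p+m+3" and k: "k < 2*p+m"
  shows "Tm p m $$ (j,k) = (\<Sum>v\<in>{0..<2*p+m+3}. Qf p m j v *
    (if k < p then rr * Pf p m v k else if k < 2*p then - Pf p m v (k-p) + (cc - 3) * Pf p m v k
     else - Pf p m v k))"
  using j k unfolding Te[OF j, of k, OF trans_less_add1[OF k]]
  by (intro sum.cong) (simp_all add: DPe DP[OF p1])

lemma T_first: assumes j: "j < 2*p+m+3" and k: "k < 2*p+m"
  shows "Tm p m $$ (j,k) = (if k < p then (if j = k then rr else 0)
     else if k < 2*p then (if j = k - p then -1 else 0) + (if j = k then cc - 3 else 0)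
     else (if j = k then -1 else 0))"
proof -
  have k3: "k < 2*p+m+3" using k by simp
  have kp3: "k - p < 2*p+m+3" using k by simp
  have QP1: "(\<Sum>v\<in>{0..<2*p+m+3}. Qf p m j v * Pf p m v k) = (if j = k then 1 else 0)" by (rule QP[OF p1 j k3])
  have QP2: "(\<Sum>v\<in>{0..<2*p+m+3}. Qf p m j v * Pf p m v (k-p)) = (if j = k-p then 1 else 0)" by (rule QP[OF p1 j kp3])
  consider "k < p" | "\<not> k < p" "k < 2*p" | "\<not> k < p" "\<not> k < 2*p" by blast
  then show ?thesis
  proof cases
    case 1
    then have "Tm p m $$ (j,k) = rr * (\<Sum>v\<in>{0..<2*p+m+3}. Qf p m j v * Pf p m v k)"
      by (simp add: Tsum[OF j k] sum_distrib_left algebra_simps)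
    then show ?thesis using 1 QP1 by simp
  next
    case 2
    then have "Tm p m $$ (j,k) = - (\<Sum>v\<in>{0..<2*p+m+3}. Qf p m j v * Pf p m v (k-p))
       + (cc - 3) * (\<Sum>v\<in>{0..<2*p+m+3}. Qf p m j v * Pf p m v k)"
      unfolding Tsum[OF j k] using 2
      by (simp add: sum_distrib_left ring_distribs sum.distrib sum_negf sum_subtractf mult.left_commute)
    then show ?thesis using 2 QP1 QP2 by simp
  next
    case 3
    then have "Tm p m $$ (j,k) = - (\<Sum>v\<in>{0..<2*p+m+3}. Qf p m j v * Pf p m v k)"
      by (simp add: Tsum[OF j k] sum_negf)
    then show ?thesis using 3 QP1 by simp
  qed
qed

lemma T_last: assumes a: "a < 3" and b: "b < 3"
  shows "Tm p m $$ (2*p+m+a, 2*p+m+b) = T2f p m a b"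
proof -
  have j: "2*p+m+a < 2*p+m+3" and k: "2*p+m+b < 2*p+m+3" using a b by auto
  have "Tm p m $$ (2*p+m+a, 2*p+m+b) = (\<Sum>v\<in>{0..<2*p+m+3}. Qf p m (2*p+m+a) v *
     real (dpm p m v (if b = 0 then p else if b = 1 then p+m+1 else 2*p+m+2)))"
    unfolding Te[OF j k]
    by (intro sum.cong) (use b in \<open>auto simp: DPe sumP[OF p1]\<close>)
  also have "\<dots> = T2f p m a b"
  proof -
    have "a = 0 \<or> a = 1 \<or> a = 2" "b = 0 \<or> b = 1 \<or> b = 2" using a b by auto
    then show ?thesis unfolding sum_split6
      by (elim disjE; simp add: Qf_def dpm_def T2f_def)
  qed
  finally show ?thesis .
qed

end



definition tdiag :: "nat \<Rightarrow> nat \<Rightarrow> real" where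
  "tdiag p i = (if i < p then rr else if i < 2*p then cc - 3 else -1)"

definition T2m :: "nat \<Rightarrow> nat \<Rightarrow> real mat" where "T2m p m = mat 3 3 (\<lambda>(a,b). T2f p m a b)"

context fixes p m :: nat assumes p1: "1 \<le> p"
begin

lemma similar: "similar_mat (Dm p m) (Tm p m)"
proof (rule similar_matI[of _ _ "Pm p m" "Qm p m" "2*p+m+3"])
  show "{Dm p m, Tm p m, Pm p m, Qm p m} \<subseteq> carrier_mat (2*p+m+3) (2*p+m+3)" using carr by auto
  show "Pm p m * Qm p m = 1\<^sub>m (2*p+m+3)" by (rule PQm[OF p1])
  show "Qm p m * Pm p m = 1\<^sub>m (2*p+m+3)" by (rule QPm[OF p1])
  have P: "Pm p m \<in> carrier_mat (2*p+m+3) (2*p+m+3)" and Q: "Qm p m \<in> carrier_mat (2*p+m+3) (2*p+m+3)"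
    and D: "Dm p m \<in> carrier_mat (2*p+m+3) (2*p+m+3)" using carr by auto
  have "Pm p m * Tm p m * Qm p m = Pm p m * (Qm p m * (Dm p m * Pm p m)) * Qm p m" by (simp add: Tm_def)
  also have "\<dots> = (Pm p m * Qm p m) * (Dm p m * Pm p m) * Qm p m"
    using P Q D by (simp add: assoc_mult_mat[of _ "2*p+m+3" "2*p+m+3" _ "2*p+m+3" _ "2*p+m+3"])
  also have "\<dots> = Dm p m * (Pm p m * Qm p m)"
    using P Q D by (simp add: PQm[OF p1] assoc_mult_mat[of _ "2*p+m+3" "2*p+m+3" _ "2*p+m+3" _ "2*p+m+3"])
  also have "\<dots> = Dm p m" using D by (simp add: PQm[OF p1])
  finally show "Dm p m = Pm p m * Tm p m * Qm p m" by simp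
qed

lemma cpm_entry: assumes "i < 2*p+m+3" "j < 2*p+m+3"
  shows "char_poly_matrix (Tm p m) $$ (i,j) = (if i = j then [:0,1:] else 0) + [: - Tm p m $$ (i,j) :]"
  using assms by (simp add: char_poly_matrix_def dims[OF p1])


lemma Tzero: assumes i: "i < 2*p+m+3" and j: "j < 2*p+m" and ij: "j < i"
  shows "Tm p m $$ (i,j) = 0"
  proof -
  have "i \<noteq> j - p" "i \<noteq> j" using ij by arith+
  then show ?thesis by (simp add: T_first[OF p1 i j])
qed

lemma Tdiag: assumes j: "j < 2*p+m"
  shows "Tm p m $$ (j,j) = tdiag p j"
  proof -
  have j3: "j < 2*p+m+3" using j by simp
  have "j \<noteq> j - p \<or> \<not> (p \<le> j)" using p1 by arith
  then show ?thesis unfolding T_first[OF p1 j3 j] tdiag_def by auto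
qed

lemma cp_T: "char_poly (Tm p m) = (\<Prod>i\<in>{0..<2*p+m}. [:- tdiag p i, 1:]) * char_poly (T2m p m)"
proof -
  define N where "N = 2*p+m"
  define CT where "CT = char_poly_matrix (Tm p m)"
  define M1 where "M1 = mat N N (\<lambda>(i,j). CT $$ (i,j))"
  define M2 where "M2 = mat N 3 (\<lambda>(i,j). CT $$ (i,j+N))"
  define M4 where "M4 = mat 3 3 (\<lambda>(i,j). CT $$ (i+N,j+N))"
  have CTc: "CT \<in> carrier_mat (N+3) (N+3)" unfolding CT_def N_def
    using carr(4)[of p m] by simp
  have CTe: "CT $$ (i,j) = (if i = j then [:0,1:] else 0) + [: - Tm p m $$ (i,j) :]"
    if "i < N+3" "j < N+3" for i j
    unfolding CT_def by (rule cpm_entry) (use that in \<open>auto simp: N_def\<close>)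
  have blk: "CT = four_block_mat M1 M2 (0\<^sub>m 3 N) M4"
  proof (rule eq_matI)
    fix i j assume "i < dim_row (four_block_mat M1 M2 (0\<^sub>m 3 N) M4)" "j < dim_col (four_block_mat M1 M2 (0\<^sub>m 3 N) M4)"
    then have i: "i < N+3" and j: "j < N+3" by (auto simp: M1_def M4_def)
    show "CT $$ (i,j) = four_block_mat M1 M2 (0\<^sub>m 3 N) M4 $$ (i,j)"
    proof (cases "i < N \<or> N \<le> j")
      case True
      then show ?thesis using i j by (auto simp: M1_def M2_def M4_def)
    next
      case False
      then have "j < N" "j < i" by auto
      then have "Tm p m $$ (i,j) = 0" using Tzero i unfolding N_def by auto
      then show ?thesis using i j False CTe[OF i j] by (auto simp: M1_def M2_def M4_def)
    qed
  qed (use CTc in \<open>auto simp: M1_def M4_def\<close>)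
  have "det CT = det M1 * det M4"
    unfolding blk by (rule det_four_block_mat_lower_left_zero) (auto simp: M1_def M2_def M4_def)
  moreover have "M4 = char_poly_matrix (T2m p m)"
  proof (rule eq_matI)
    fix i j assume "i < dim_row (char_poly_matrix (T2m p m))" "j < dim_col (char_poly_matrix (T2m p m))"
    then have i: "i < 3" and j: "j < 3" by (auto simp: T2m_def char_poly_matrix_def)
    have "Tm p m $$ (i+N, j+N) = T2f p m i j" using T_last[OF p1 i j] by (simp add: N_def add.commute)
    then show "M4 $$ (i,j) = char_poly_matrix (T2m p m) $$ (i,j)"
      using i j CTe[of "i+N" "j+N"] by (simp add: M4_def char_poly_matrix_def T2m_def)
  qed (auto simp: M4_def char_poly_matrix_def T2m_def)
  moreover have "det M1 = (\<Prod>i\<in>{0..<N}. [:- tdiag p i, 1:])"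
  proof -
    have ut: "upper_triangular M1"
      unfolding upper_triangular_def
    proof (intro allI impI)
      fix i j assume "i < dim_row M1" "j < i"
      then have i: "i < N" and ji: "j < i" by (auto simp: M1_def)
      then show "M1 $$ (i,j) = 0" using CTe[of i j] Tzero[of i j] unfolding N_def M1_def by auto
    qed
    have "det M1 = prod_list (diag_mat M1)"
      by (rule det_upper_triangular[OF ut, of N]) (simp add: M1_def)
    also have "diag_mat M1 = map (\<lambda>i. [:- tdiag p i, 1:]) [0..<N]"
    proof -
      have dM: "dim_row M1 = N" by (simp add: M1_def)
      show ?thesis unfolding diag_mat_def dM
    proof (rule map_cong)
      fix x assume "x \<in> set [0..<N]"
      then have x: "x < N" by simp
      then show "M1 $$ (x,x) = [:- tdiag p x, 1:]" using CTe[of x x] Tdiag[of x] unfolding N_def M1_def by simp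
    qed simp
    qed
    also have "prod_list (map (\<lambda>i. [:- tdiag p i, 1:]) [0..<N]) = (\<Prod>i\<in>{0..<N}. [:- tdiag p i, 1:])"
      by (subst prod.distinct_set_conv_list[symmetric]) auto
    finally show ?thesis .
  qed
  ultimately show ?thesis unfolding char_poly_def CT_def N_def by simp
qed

end



lemma sorted2: fixes M :: "real multiset"
  assumes "\<forall>a\<in>#M. a \<le> r" "r < x"
  shows "rev (sorted_list_of_multiset (add_mset x (add_mset r M))) ! 1 = r"
proof -
  define ys where "ys = sorted_list_of_multiset M"
  have s: "sorted (ys @ [r, x])" using assms unfolding ys_def
    by (auto simp: sorted_append)
  have "mset (ys @ [r, x]) = add_mset x (add_mset r M)" unfolding ys_def by simp
  then have "sorted_list_of_multiset (add_mset x (add_mset r M)) = ys @ [r, x]"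
    using s by (metis sorted_list_of_multiset_mset sorted_sort_id)
  then show ?thesis by simp
qed

lemma deg1: fixes q :: "real poly" assumes "degree q = 1"
  shows "q = [:coeff q 0, coeff q 1:]"
  using assms by (auto simp: poly_eq_iff coeff_pCons coeff_eq_0 split: nat.split)

lemma poly_T2: "poly (char_poly (T2m p m)) x =
   x^3 + (5 - 4 * (real p + 1) - (real m + 1)) * x^2
   + (6 - 4 * (real m + 1) - 6 * (real p + 1) - (real p + 1) * (real m + 1) - (real p + 1)^2) * x
   + (2 - 2 * (real m + 1) - 2 * (real p + 1) - (real p + 1) * (real m + 1) - (real p + 1)^2)"
proof -
  have c: "char_poly_matrix (T2m p m) \<in> carrier_mat 3 3" by (simp add: T2m_def)
  show ?thesis unfolding char_poly_def det3[OF c]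
    by (simp add: char_poly_matrix_def T2m_def T2f_def algebra_simps power2_eq_square power3_eq_cube)
qed


lemma sqrt2_bounds: "1.41 < sqrt 2" "sqrt 2 < 1.42"
  by (rule real_less_rsqrt, simp add: power2_eq_square) (rule real_less_lsqrt, simp_all add: power2_eq_square)

lemma q_rr: "poly (char_poly (T2m p m)) rr = (real p + 1) * ((real p + real m + 2 - 14) - sqrt 2 * (real p + real m + 2 - 10))"
proof -
  have s2: "sqrt 2 * sqrt 2 = 2" by simp
  show ?thesis unfolding poly_T2 rr_def
    by (simp add: algebra_simps power2_eq_square power3_eq_cube s2)
qed

lemma q_rr_neg: "poly (char_poly (T2m p m)) rr < 0"
proof -
  define u where "u = real p + real m + 2"
  have u: "u \<ge> 2" unfolding u_def by simp
  have "u - 14 - sqrt 2 * (u - 10) < 0"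
  proof (cases "u \<ge> 10")
    case True
    then have "sqrt 2 * (u - 10) \<ge> 1 * (u - 10)"
      using sqrt2_bounds by (intro mult_right_mono) auto
    then show ?thesis by simp
  next
    case False
    then have "sqrt 2 * (u - 10) > 1.42 * (u - 10)"
      using sqrt2_bounds by (intro mult_strict_right_mono_neg) auto
    then show ?thesis using u by simp
  qed
  then have "(real p + 1) * (u - 14 - sqrt 2 * (u - 10)) < 0"
    by (simp add: mult_pos_neg)
  then show ?thesis unfolding q_rr u_def by simp
qed

lemma q_m1: "poly (char_poly (T2m p m)) (-1) = real m + 1"
  unfolding poly_T2 by (simp add: algebra_simps power2_eq_square power3_eq_cube)


lemma cubic_roots: fixes q :: "real poly"
  assumes dq: "degree q = 3" and lq: "coeff q 3 = 1" and qr: "poly q r < 0" and wr: "w < r" and qw: "poly q w > 0"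
  shows "\<exists>x y z. r < x \<and> y < r \<and> z < r \<and> q = [:-x,1:] * [:-y,1:] * [:-z,1:]"
proof -
  have "lead_coeff q > 0" using dq lq by simp
  from poly_pinfty_gt_lc[OF this] obtain N where N: "\<And>v. v \<ge> N \<Longrightarrow> poly q v \<ge> lead_coeff q" by blast
  define b where "b = max N (r + 1)"
  have "poly q b > 0" using N[of b] \<open>lead_coeff q > 0\<close> unfolding b_def by fastforce
  moreover have "r < b" unfolding b_def by simp
  ultimately obtain x where x: "r < x" "poly q x = 0" using poly_IVT_pos[OF _ qr] by blast
  then obtain q2 where q2: "q = [:-x,1:] * q2" using poly_eq_0_iff_dvd by (metis dvdE)
  have q0: "q \<noteq> 0" using dq by auto
  then have q20: "q2 \<noteq> 0" using q2 by auto
  have "degree q = degree [:-x,1:] + degree q2" unfolding q2 by (rule degree_mult_eq) (use q20 in auto)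
  then have dq2: "degree q2 = 2" using dq by simp
  have "lead_coeff q = lead_coeff [:-x,1:] * lead_coeff q2" unfolding q2 by (rule lead_coeff_mult)
  then have lq2: "coeff q2 2 = 1" using lq dq dq2 by simp
  have "poly q r = (r - x) * poly q2 r" unfolding q2 by (simp add: algebra_simps)
  then have q2r: "poly q2 r > 0" using qr x(1) by (simp add: mult_less_0_iff)
  have "poly q w = (w - x) * poly q2 w" unfolding q2 by (simp add: algebra_simps)
  then have q2w: "poly q2 w < 0" using qw x(1) wr by (simp add: zero_less_mult_iff)
  obtain y where y: "w < y" "y < r" "poly q2 y = 0" using poly_IVT_pos[OF wr q2w q2r] by blast
  then obtain q3 where q3: "q2 = [:-y,1:] * q3" using poly_eq_0_iff_dvd by (metis dvdE)
  then have q30: "q3 \<noteq> 0" using q20 by auto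
  have "degree q2 = degree [:-y,1:] + degree q3" unfolding q3 by (rule degree_mult_eq) (use q30 in auto)
  then have dq3: "degree q3 = 1" using dq2 by simp
  have "lead_coeff q2 = lead_coeff [:-y,1:] * lead_coeff q3" unfolding q3 by (rule lead_coeff_mult)
  then have lq3: "coeff q3 1 = 1" using lq2 dq2 dq3 by simp
  define z where "z = - coeff q3 0"
  have q3e: "q3 = [:-z, 1:]" using deg1[OF dq3] lq3 unfolding z_def by simp
  have "poly q2 r = (r - y) * poly q3 r" unfolding q3 by (simp add: algebra_simps)
  then have "poly q3 r > 0" using q2r y(2) by (simp add: zero_less_mult_iff)
  then have "z < r" using q3e by simp
  moreover have "q = [:-x,1:] * [:-y,1:] * [:-z,1:]" unfolding q2 q3 q3e by (simp only: mult.assoc)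
  ultimately show ?thesis using x(1) y(2) by blast
qed




lemma dfun_dpm: assumes "u < 2*p+m+3" "v < 2*p+m+3"
  shows "dfun (p+m+2) (p+1) u v = dpm p m u v"
  using assms unfolding dfun_def dpm_def Kst_adj_def by auto

lemma tdiag_le: "tdiag p i \<le> rr"
  using sqrt2_bounds unfolding tdiag_def rr_def cc_def by auto

lemma in_sum_single: "finite A \<Longrightarrow> a \<in># (\<Sum>i\<in>A. {#f i#}) \<Longrightarrow> \<exists>i\<in>A. a = f i"
  by (induction A rule: finite_induct) auto

theorem corollary3p2:
  fixes s t n :: nat
  assumes "3 \<le> t + 1" and "t + 1 \<le> s" and "n = s + t"
  shows "eigval (dist_matrix n (Kst_adj s t)) 2 = sqrt 2 - 2"
proof -
  define p where "p = t - 1"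
  define m where "m = s - t - 1"
  have p1: "1 \<le> p" using assms unfolding p_def by simp
  have sE: "s = p+m+2" and tE: "t = p+1" and nE: "n = 2*p+m+3" using assms unfolding p_def m_def by auto
  have D: "dist_matrix n (Kst_adj s t) = Dm p m"
  proof (rule eq_matI)
    fix i j assume "i < dim_row (Dm p m)" "j < dim_col (Dm p m)"
    then have i: "i < 2*p+m+3" and j: "j < 2*p+m+3" by (auto simp: Dm_def)
    have "graph_dist (Kst_adj s t) i j = dpm p m i j"
      unfolding sE tE using graph_dist_Kst[of "p+1" "p+m+2" i j] dfun_dpm[OF i j] i j p1 by simp
    then show "dist_matrix n (Kst_adj s t) $$ (i, j) = Dm p m $$ (i, j)"
      using i j unfolding dist_matrix_def Dm_def nE by simp
  qed (auto simp: dist_matrix_def Dm_def nE)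
  have cpD: "char_poly (Dm p m) = (\<Prod>i\<in>{0..<2*p+m}. [:- tdiag p i, 1:]) * char_poly (T2m p m)"
    using char_poly_similar[OF similar[OF p1]] cp_T[OF p1] by simp
  have T2c: "T2m p m \<in> carrier_mat 3 3" by (simp add: T2m_def)
  have rr1: "-1 < rr" using sqrt2_bounds unfolding rr_def by simp
  obtain x y z where xyz: "rr < x" "y < rr" "z < rr"
    and qe: "char_poly (T2m p m) = [:-x,1:] * [:-y,1:] * [:-z,1:]"
    using cubic_roots[of "char_poly (T2m p m)" rr "-1"] degree_monic_char_poly[OF T2c] q_rr_neg q_m1 rr1
    by fastforce
  define M where "M = (\<Sum>i\<in>{Suc 0..<2*p+m}. {#tdiag p i#}) + {#y, z#}"
  have "proots (char_poly (Dm p m)) = (\<Sum>i\<in>{0..<2*p+m}. {#tdiag p i#}) + {#x, y, z#}"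
    unfolding cpD qe
    by (subst proots_mult, simp, simp, subst proots_prod, simp, subst proots_mult, simp, simp,
        subst proots_mult, simp, simp, simp)
  also have "(\<Sum>i\<in>{0..<2*p+m}. {#tdiag p i#}) = {#tdiag p 0#} + (\<Sum>i\<in>{Suc 0..<2*p+m}. {#tdiag p i#})"
    using p1 by (subst sum.atLeast_Suc_lessThan) auto
  also have "tdiag p 0 = rr" using p1 by (simp add: tdiag_def)
  finally have PR: "proots (char_poly (Dm p m)) = add_mset x (add_mset rr M)" unfolding M_def by simp
  have Mle: "\<forall>a\<in>#M. a \<le> rr" unfolding M_def using tdiag_le xyz
    by (auto dest!: in_sum_single[rotated])
  show ?thesis unfolding D eigval_def PR using sorted2[OF Mle xyz(1)] by (simp add: rr_def)
qed


end
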